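(* Let $b>0$ and let $A_1,\dots,A_n$ and $L_1,\dots,L_n$ be finite linear orders, with $A_1,\dots,A_n$ non-empty. There is a finite linear order $I$ with the following property. Consider a coloring with $b$ colors of all $n$-tuples $(s_1,\dots,s_n)$ such that (i) $s_1\colon A_1\oplus (L_1\times I)^y\to A_1\oplus 1$, for some $y\in L_1\times I$, is a sealed $A_1$-rigid surjection, and (ii) for $2\leq i\leq n$, $s_i\colon A_i\oplus (L_i\times I)\to A_i$ is an $A_i$-rigid surjection. Then there exist functions $p_i\colon A_i\oplus (L_i\times I)\to A_i\oplus L_i$, $1\leq i\leq n$, each with property (P) (for $A=A_i$, $L=L_i$), such that for each $x\in L_1$, each sealed $A_1$-rigid surjection $r_1\colon A_1\oplus L_1^x\to A_1\oplus 1$ and all $A_i$-rigid surjections $r_i\colon A_i\oplus L_i\to A_i$, $2\leq i\leq n$, the color of \[ (r_1\circ p_1^x,\ r_2\circ p_2,\ \dots,\ r_n\circ p_n) \] depends only on $x$.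
   Context: For linear orders $A$ and $L$, $A\oplus L$ is the linear order on the disjoint union with $L$ placed on top of $A$; $A\oplus 1$ is $A$ with one new top element added. $L\times I$ carries the lexicographic order. For a linear order $J$ and $x\in J$, $J^x=\{y\in J\mid y\leq_J x\}$. A function $p\colon A\oplus(L\times I)\to A\oplus L$ has property (P) if $p\upharpoonright A={\rm id}_A$ and for every $x\in L$, $x\in p[\{x\}\times I]\subseteq A\cup\{x\}$. For such $p$ and $x\in L$, $p^x$ denotes the restriction of $p$ to $\{z\in A\oplus(L\times I)\mid z\leq \min p^{-1}(x)\}$. An $A$-rigid surjection from $A\oplus J$ to $A$ (with $J$ a linear order) is any function that is the identity on $A$. A sealed $A$-rigid surjection from $A\oplus J^x$ to $A\oplus 1$ is a function that is the identity on $A$, maps $x$ (the largest element) to the top element of $A\oplus 1$, and maps all other elements of $J^x$ into $A$. *)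

theory Defs
  imports Main
begin

text \<open>
A finite linear order of size k is represented by
{0..<k} with the usual order (every finite linear order is isomorphic to one).
For |A| = a and a linear order J of size k, A \<oplus> J is {0..<a+k}: the elements
of A are 0..<a and the element j of J is a+j.  A \<oplus> 1 is {0..<a+1}, with top a.
For |L| = l and |I| = m, L \<times> I (lexicographic) is encoded by (x,i) \<mapsto> x*m+i,
so A \<oplus> (L \<times> I) is {0..<a+l*m} and (x,i) is the element a+x*m+i.
For y in a linear order J (encoded as {0..<k}), J^y = {0..y}, so
A \<oplus> J^y is {0..a+y} with largest element a+y.
Functions are partial maps whose domain is exactly the intended domain.
\<close>

text \<open>A-rigid surjection from A \<oplus> J to A (|A| = a, |J| = k).\<close>
definition rigid_surj :: "nat \<Rightarrow> nat \<Rightarrow> (nat \<rightharpoonup> nat) \<Rightarrow> bool" where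
  "rigid_surj a k f \<longleftrightarrow>
     dom f = {..<a+k} \<and> (\<forall>z<a. f z = Some z) \<and>
     (\<forall>z. a \<le> z \<and> z < a+k \<longrightarrow> (\<exists>w<a. f z = Some w))"

text \<open>Sealed A-rigid surjection from A \<oplus> J^y to A \<oplus> 1 (|A| = a, y \<in> J).\<close>
definition sealed_rigid_surj :: "nat \<Rightarrow> nat \<Rightarrow> (nat \<rightharpoonup> nat) \<Rightarrow> bool" where
  "sealed_rigid_surj a y f \<longleftrightarrow>
     dom f = {..a+y} \<and> (\<forall>z<a. f z = Some z) \<and> f (a+y) = Some a \<and>
     (\<forall>z. a \<le> z \<and> z < a+y \<longrightarrow> (\<exists>w<a. f z = Some w))"

text \<open>Property (P) for p : A \<oplus> (L \<times> I) \<rightarrow> A \<oplus> L, with |A| = a, |L| = l, |I| = m.\<close>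
definition propP :: "nat \<Rightarrow> nat \<Rightarrow> nat \<Rightarrow> (nat \<rightharpoonup> nat) \<Rightarrow> bool" where
  "propP a l m p \<longleftrightarrow>
     dom p = {..<a+l*m} \<and> (\<forall>z<a. p z = Some z) \<and>
     (\<forall>x<l. (\<exists>i<m. p (a + x*m + i) = Some (a+x)) \<and>
            (\<forall>i<m. \<exists>w. p (a + x*m + i) = Some w \<and> (w < a \<or> w = a+x)))"

text \<open>p^x: restriction of p to the elements \<le> min p^{-1}(x), for x \<in> L (encoded a+x).\<close>
definition p_up :: "nat \<Rightarrow> (nat \<rightharpoonup> nat) \<Rightarrow> nat \<Rightarrow> (nat \<rightharpoonup> nat)" where
  "p_up a p x = p |` {..(LEAST z. p z = Some (a+x))}"

text \<open>Tuples (s_1,...,s_n) to be colored: as = [|A_1|,...,|A_n|], ls = [|L_1|,...,|L_n|],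
  m = |I|; index 0 of the list corresponds to index 1 of the paper.\<close>
definition admissible :: "nat list \<Rightarrow> nat list \<Rightarrow> nat \<Rightarrow> (nat \<rightharpoonup> nat) list \<Rightarrow> bool" where
  "admissible as ls m s \<longleftrightarrow>
     length s = length as \<and>
     (\<exists>y < ls!0 * m. sealed_rigid_surj (as!0) y (s!0)) \<and>
     (\<forall>i. 1 \<le> i \<and> i < length as \<longrightarrow> rigid_surj (as!i) (ls!i * m) (s!i))"

end

theory Submission
  imports Defs "HOL-Library.FuncSet"
begin


definition wds :: "nat \<Rightarrow> nat \<Rightarrow> (nat \<Rightarrow> nat) set" where
  "wds k N = {w. (\<forall>i<N. w i < k) \<and> (\<forall>i. N \<le> i \<longrightarrow> w i = 0)}"

definition lpt :: "(nat \<Rightarrow> nat) \<Rightarrow> nat set \<Rightarrow> nat \<Rightarrow> nat \<Rightarrow> nat" where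
  "lpt w S t = (\<lambda>i. if i \<in> S then t else w i)"

definition isline :: "nat \<Rightarrow> nat \<Rightarrow> (nat \<Rightarrow> nat) \<Rightarrow> nat set \<Rightarrow> bool" where
  "isline k N w S \<longleftrightarrow> w \<in> wds k N \<and> S \<subseteq> {..<N} \<and> S \<noteq> {}"

definition cat :: "nat \<Rightarrow> (nat \<Rightarrow> nat) \<Rightarrow> (nat \<Rightarrow> nat) \<Rightarrow> nat \<Rightarrow> nat" where
  "cat n v u = (\<lambda>i. if i < n then v i else u (i - n))"

lemma lpt_wds: "isline k N w S \<Longrightarrow> t < k \<Longrightarrow> lpt w S t \<in> wds k N"
  unfolding isline_def wds_def lpt_def by auto

lemma finite_wds: "finite (wds k N)"
proof -
  have "wds k N \<subseteq> (\<lambda>f i. if i < N then f i else 0) ` ({..<N} \<rightarrow>\<^sub>E {..<k})"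
  proof
    fix w assume w: "w \<in> wds k N"
    have "w = (\<lambda>i. if i < N then (restrict w {..<N}) i else 0)"
      using w by (auto simp: wds_def)
    moreover have "restrict w {..<N} \<in> {..<N} \<rightarrow>\<^sub>E {..<k}" using w by (auto simp: wds_def)
    ultimately show "w \<in> (\<lambda>f i. if i < N then f i else 0) ` ({..<N} \<rightarrow>\<^sub>E {..<k})" by blast
  qed
  then show ?thesis by (rule finite_subset) (auto intro: finite_PiE)
qed

lemma wds_mono: "k \<le> K \<Longrightarrow> wds k N \<subseteq> wds K N"
  unfolding wds_def by fastforce

lemma zero_wds: "0 < k \<Longrightarrow> (\<lambda>_. 0) \<in> wds k N"
  unfolding wds_def by auto

lemma cat_wds: "v \<in> wds K n \<Longrightarrow> u \<in> wds K m \<Longrightarrow> cat n v u \<in> wds K (n+m)"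
  unfolding wds_def cat_def by auto

lemma lpt_cat: "S1 \<subseteq> {..<n} \<Longrightarrow>
   lpt (cat n w1 w2) (S1 \<union> (+) n ` S2) t = cat n (lpt w1 S1 t) (lpt w2 S2 t)"
  unfolding lpt_def cat_def
  by (rule ext) (auto simp: image_iff; metis add_diff_inverse_nat)

lemma lpt_cat1: "S1 \<subseteq> {..<n} \<Longrightarrow> lpt (cat n w1 w2) S1 t = cat n (lpt w1 S1 t) w2"
  unfolding lpt_def cat_def by (rule ext) auto

lemma lpt_cat2: "lpt (cat n w1 w2) ((+) n ` S2) t = cat n w1 (lpt w2 S2 t)"
  unfolding lpt_def cat_def
  by (rule ext) (auto simp: image_iff; metis add_diff_inverse_nat)

definition HJP :: "nat \<Rightarrow> bool" where
  "HJP k \<longleftrightarrow> (\<forall>r. \<exists>N. \<forall>\<chi>. (\<forall>w\<in>wds k N. \<chi> w < (r::nat)) \<longrightarrow>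
      (\<exists>w S. isline k N w S \<and> (\<forall>t<k. \<chi> (lpt w S t) = \<chi> (lpt w S 0))))"

lemma HJP_gen:
  assumes "HJP k"
  shows "\<exists>N. \<forall>\<chi> :: (nat \<Rightarrow> nat) \<Rightarrow> 'c. card (\<chi> ` wds k N) \<le> r \<longrightarrow>
      (\<exists>w S. isline k N w S \<and> (\<forall>t<k. \<chi> (lpt w S t) = \<chi> (lpt w S 0)))"
proof -
  obtain N where N: "\<And>\<chi>. (\<forall>w\<in>wds k N. \<chi> w < r) \<Longrightarrow>
      (\<exists>w S. isline k N w S \<and> (\<forall>t<k. \<chi> (lpt w S t) = \<chi> (lpt w S 0)))"
    using assms unfolding HJP_def by blast
  show ?thesis
  proof (rule exI[of _ N], intro allI impI)
    fix \<chi> :: "(nat \<Rightarrow> nat) \<Rightarrow> 'c"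
    assume c: "card (\<chi> ` wds k N) \<le> r"
    have fin: "finite (\<chi> ` wds k N)" using finite_wds by blast
    obtain f :: "'c \<Rightarrow> nat" and n where f: "f ` (\<chi> ` wds k N) = {i. i < n}" "inj_on f (\<chi> ` wds k N)"
      using finite_imp_inj_to_nat_seg[OF fin] by blast
    have "n = card (\<chi> ` wds k N)"
      using f card_image[OF f(2)] by simp
    with c have nr: "n \<le> r" by simp
    have "\<forall>w\<in>wds k N. (f \<circ> \<chi>) w < r"
    proof
      fix w assume "w \<in> wds k N"
      then have "f (\<chi> w) \<in> {i. i < n}" using f(1) by blast
      then show "(f \<circ> \<chi>) w < r" using nr by simp
    qed
    from N[OF this] obtain w S where L: "isline k N w S"
      "\<forall>t<k. (f \<circ> \<chi>) (lpt w S t) = (f \<circ> \<chi>) (lpt w S 0)" by blast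
    have "\<forall>t<k. \<chi> (lpt w S t) = \<chi> (lpt w S 0)"
    proof (intro allI impI)
      fix t assume t: "t < k"
      then have "0 < k" by simp
      have "\<chi> (lpt w S t) \<in> \<chi> ` wds k N" "\<chi> (lpt w S 0) \<in> \<chi> ` wds k N"
        using lpt_wds[OF L(1) t] lpt_wds[OF L(1) \<open>0<k\<close>] by auto
      then show "\<chi> (lpt w S t) = \<chi> (lpt w S 0)"
        using L(2) t f(2) by (auto dest: inj_onD)
    qed
    then show "\<exists>w S. isline k N w S \<and> (\<forall>t<k. \<chi> (lpt w S t) = \<chi> (lpt w S 0))"
      using L(1) by blast
  qed
qed



lemma isline_mono: "isline k N w S \<Longrightarrow> k \<le> K \<Longrightarrow> isline K N w S"
  unfolding isline_def using wds_mono by blast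

lemma focus:
  fixes s :: nat
  assumes hk: "HJP k" and k0: "0 < k"
  shows "\<exists>N. \<forall>\<chi>. (\<forall>w\<in>wds (Suc k) N. \<chi> w < (r::nat)) \<longrightarrow>
     (\<exists>w S. isline (Suc k) N w S \<and> (\<forall>t<Suc k. \<chi> (lpt w S t) = \<chi> (lpt w S 0))) \<or>
     (\<exists>f LW LS. f \<in> wds (Suc k) N \<and>
        (\<forall>i<s. isline (Suc k) N (LW i) (LS i) \<and> lpt (LW i) (LS i) k = f \<and>
               (\<forall>t<k. \<chi> (lpt (LW i) (LS i) t) = \<chi> (lpt (LW i) (LS i) 0))) \<and>
        inj_on (\<lambda>i. \<chi> (lpt (LW i) (LS i) 0)) {..<s})"
proof (induction s)
  case 0
  show ?case
    by (rule exI[of _ 0]) (auto intro: zero_wds)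
next
  case (Suc s)
  then obtain n where IH: "\<And>\<chi>. (\<forall>w\<in>wds (Suc k) n. \<chi> w < r) \<Longrightarrow>
     (\<exists>w S. isline (Suc k) n w S \<and> (\<forall>t<Suc k. \<chi> (lpt w S t) = \<chi> (lpt w S 0))) \<or>
     (\<exists>f LW LS. f \<in> wds (Suc k) n \<and>
        (\<forall>i<s. isline (Suc k) n (LW i) (LS i) \<and> lpt (LW i) (LS i) k = f \<and>
               (\<forall>t<k. \<chi> (lpt (LW i) (LS i) t) = \<chi> (lpt (LW i) (LS i) 0))) \<and>
        inj_on (\<lambda>i. \<chi> (lpt (LW i) (LS i) 0)) {..<s})" by blast
  define V where "V = wds (Suc k) n"
  define R where "R = card (PiE V (\<lambda>_. {..<r}))"
  obtain m where HM: "\<And>\<chi> :: (nat\<Rightarrow>nat) \<Rightarrow> ((nat\<Rightarrow>nat) \<Rightarrow> nat). card (\<chi> ` wds k m) \<le> R \<Longrightarrow>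
      (\<exists>w S. isline k m w S \<and> (\<forall>t<k. \<chi> (lpt w S t) = \<chi> (lpt w S 0)))"
    using HJP_gen[OF hk, of R] by blast
  show ?case
  proof (rule exI[of _ "n+m"], intro allI impI)
    fix \<chi> :: "(nat \<Rightarrow> nat) \<Rightarrow> nat"
    assume cb: "\<forall>w\<in>wds (Suc k) (n+m). \<chi> w < r"
    define \<chi>' where "\<chi>' u = restrict (\<lambda>v. \<chi> (cat n v u)) V" for u
    have sub: "\<chi>' ` wds k m \<subseteq> PiE V (\<lambda>_. {..<r})"
    proof
      fix y assume "y \<in> \<chi>' ` wds k m"
      then obtain u where u: "u \<in> wds k m" "y = \<chi>' u" by blast
      have "u \<in> wds (Suc k) m" using u(1) wds_mono[of k "Suc k"] by auto
      then have "\<forall>v\<in>V. \<chi> (cat n v u) < r" using cb cat_wds unfolding V_def by blast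
      then show "y \<in> PiE V (\<lambda>_. {..<r})" using u(2) unfolding \<chi>'_def by auto
    qed
    have "finite V" unfolding V_def by (rule finite_wds)
    then have "card (\<chi>' ` wds k m) \<le> R"
      unfolding R_def by (intro card_mono[OF _ sub] finite_PiE) auto
    from HM[OF this] obtain wM SM where M: "isline k m wM SM"
      "\<forall>t<k. \<chi>' (lpt wM SM t) = \<chi>' (lpt wM SM 0)" by blast
    define M0 where "M0 = lpt wM SM 0"
    have Mc: "\<chi> (cat n v (lpt wM SM t)) = \<chi> (cat n v M0)" if "v \<in> V" "t < k" for v t
    proof -
      have "\<chi>' (lpt wM SM t) = \<chi>' (lpt wM SM 0)" using M(2) that(2) by blast
      then have "\<chi>' (lpt wM SM t) v = \<chi>' (lpt wM SM 0) v" by simp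
      then show ?thesis using that(1) unfolding \<chi>'_def M0_def by simp
    qed
    have MS: "isline (Suc k) m wM SM" using isline_mono[OF M(1)] by simp
    have M0w: "M0 \<in> wds (Suc k) m" unfolding M0_def by (rule lpt_wds[OF MS]) simp
    define \<chi>0 where "\<chi>0 v = \<chi> (cat n v M0)" for v
    have c0: "\<forall>w\<in>wds (Suc k) n. \<chi>0 w < r"
      unfolding \<chi>0_def using cb cat_wds M0w by blast
    have lift: "\<exists>w S. isline (Suc k) (n+m) w S \<and> (\<forall>t<Suc k. \<chi> (lpt w S t) = \<chi> (lpt w S 0))"
      if L: "isline (Suc k) n w S" "\<forall>t<Suc k. \<chi>0 (lpt w S t) = \<chi>0 (lpt w S 0)" for w S
    proof (intro exI conjI)
      show "isline (Suc k) (n+m) (cat n w M0) S"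
        using L(1) M0w cat_wds unfolding isline_def by fastforce
      have Sn: "S \<subseteq> {..<n}" using L(1) unfolding isline_def by blast
      show "\<forall>t<Suc k. \<chi> (lpt (cat n w M0) S t) = \<chi> (lpt (cat n w M0) S 0)"
      proof (intro allI impI)
        fix t assume "t < Suc k"
        then have "\<chi>0 (lpt w S t) = \<chi>0 (lpt w S 0)" using L(2) by blast
        then show "\<chi> (lpt (cat n w M0) S t) = \<chi> (lpt (cat n w M0) S 0)"
          unfolding \<chi>0_def by (simp add: lpt_cat1[OF Sn])
      qed
    qed
    from IH[OF c0] show "(\<exists>w S. isline (Suc k) (n+m) w S \<and> (\<forall>t<Suc k. \<chi> (lpt w S t) = \<chi> (lpt w S 0))) \<or>
     (\<exists>f LW LS. f \<in> wds (Suc k) (n+m) \<and>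
        (\<forall>i<Suc s. isline (Suc k) (n+m) (LW i) (LS i) \<and> lpt (LW i) (LS i) k = f \<and>
               (\<forall>t<k. \<chi> (lpt (LW i) (LS i) t) = \<chi> (lpt (LW i) (LS i) 0))) \<and>
        inj_on (\<lambda>i. \<chi> (lpt (LW i) (LS i) 0)) {..<Suc s})"
    proof (elim disjE exE conjE)
      fix w S assume "isline (Suc k) n w S" "\<forall>t<Suc k. \<chi>0 (lpt w S t) = \<chi>0 (lpt w S 0)"
      then show ?thesis using lift by blast
    next
      fix f LW LS
      assume f: "f \<in> wds (Suc k) n"
        and LL: "\<forall>i<s. isline (Suc k) n (LW i) (LS i) \<and> lpt (LW i) (LS i) k = f \<and>
               (\<forall>t<k. \<chi>0 (lpt (LW i) (LS i) t) = \<chi>0 (lpt (LW i) (LS i) 0))"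
        and inj: "inj_on (\<lambda>i. \<chi>0 (lpt (LW i) (LS i) 0)) {..<s}"
      have LL1: "isline (Suc k) n (LW i) (LS i)" if "i < s" for i using LL that by blast
      have LL2: "lpt (LW i) (LS i) k = f" if "i < s" for i using LL that by blast
      have LL3: "\<chi>0 (lpt (LW i) (LS i) t) = \<chi>0 (lpt (LW i) (LS i) 0)" if "i < s" "t < k" for i t
        using LL that by blast
      show ?thesis
      proof (cases "\<exists>i<s. \<chi>0 f = \<chi>0 (lpt (LW i) (LS i) 0)")
        case True
        then obtain i where i: "i < s" "\<chi>0 f = \<chi>0 (lpt (LW i) (LS i) 0)" by blast
        have "\<forall>t<Suc k. \<chi>0 (lpt (LW i) (LS i) t) = \<chi>0 (lpt (LW i) (LS i) 0)"
        proof (intro allI impI)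
          fix t assume "t < Suc k"
          then consider "t < k" | "t = k" by linarith
          then show "\<chi>0 (lpt (LW i) (LS i) t) = \<chi>0 (lpt (LW i) (LS i) 0)"
          proof cases
            case 1 then show ?thesis using LL3[OF i(1)] by blast
          next
            case 2 then show ?thesis using LL2[OF i(1)] i(2) by simp
          qed
        qed
        then show ?thesis using lift LL1[OF i(1)] by blast
      next
        case False
        define LW' where "LW' i = (if i < s then cat n (LW i) wM else cat n f wM)" for i
        define LS' where "LS' i = (if i < s then LS i \<union> (+) n ` SM else (+) n ` SM)" for i
        define f' where "f' = cat n f (lpt wM SM k)"
        have pt: "lpt (LW' i) (LS' i) t = cat n (if i < s then lpt (LW i) (LS i) t else f) (lpt wM SM t)"
          for i t
        proof (cases "i < s")
          case True
          then have "LS i \<subseteq> {..<n}" using LL1 unfolding isline_def by blast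
          then show ?thesis using True unfolding LW'_def LS'_def by (simp add: lpt_cat)
        next
          case False
          then show ?thesis unfolding LW'_def LS'_def by (simp add: lpt_cat2)
        qed
        have Vf: "f \<in> V" using f unfolding V_def .
        have VL: "lpt (LW i) (LS i) t \<in> V" if "i < s" "t < Suc k" for i t
          unfolding V_def by (rule lpt_wds[OF LL1[OF that(1)] that(2)])
        have col: "\<chi> (lpt (LW' i) (LS' i) 0) = (if i < s then \<chi>0 (lpt (LW i) (LS i) 0) else \<chi>0 f)" for i
          using pt[of i 0] unfolding \<chi>0_def M0_def by simp
        have fin1: "f' \<in> wds (Suc k) (n+m)"
          unfolding f'_def by (rule cat_wds[OF f lpt_wds[OF MS]]) simp
        have fin2: "isline (Suc k) (n+m) (LW' i) (LS' i)" if i: "i < Suc s" for i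
        proof (cases "i < s")
          case True
          have b1: "cat n (LW i) wM \<in> wds (Suc k) (n+m)"
            using cat_wds LL1[OF True] MS unfolding isline_def by blast
          have s1: "LS i \<subseteq> {..<n+m}" "LS i \<noteq> {}" using LL1[OF True] unfolding isline_def by auto
          have s2: "(+) n ` SM \<subseteq> {..<n+m}" using MS unfolding isline_def by auto
          show ?thesis unfolding isline_def LW'_def LS'_def using True b1 s1 s2 by simp
        next
          case False
          have b2: "cat n f wM \<in> wds (Suc k) (n+m)"
            using cat_wds f MS unfolding isline_def by blast
          have s2: "(+) n ` SM \<subseteq> {..<n+m}" "(+) n ` SM \<noteq> {}" using MS unfolding isline_def by auto
          show ?thesis unfolding isline_def LW'_def LS'_def using False b2 s2 by simp
        qed
        have fin3: "lpt (LW' i) (LS' i) k = f'" for i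
          using pt[of i k] LL2 unfolding f'_def by simp
        have fin4: "\<chi> (lpt (LW' i) (LS' i) t) = \<chi> (lpt (LW' i) (LS' i) 0)" if t: "t < k" for i t
        proof (cases "i < s")
          case True
          have "\<chi> (lpt (LW' i) (LS' i) t) = \<chi> (cat n (lpt (LW i) (LS i) t) (lpt wM SM t))"
            using pt[of i t] True by simp
          also have "\<dots> = \<chi>0 (lpt (LW i) (LS i) t)"
            using Mc[OF VL[OF True] t] t unfolding \<chi>0_def by simp
          also have "\<dots> = \<chi>0 (lpt (LW i) (LS i) 0)" using LL3[OF True t] .
          finally show ?thesis using col[of i] True by simp
        next
          case False
          have "\<chi> (lpt (LW' i) (LS' i) t) = \<chi> (cat n f (lpt wM SM t))"
            using pt[of i t] False by simp
          also have "\<dots> = \<chi>0 f" using Mc[OF Vf t] unfolding \<chi>0_def by simp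
          finally show ?thesis using col[of i] False by simp
        qed
        have fin5: "inj_on (\<lambda>i. \<chi> (lpt (LW' i) (LS' i) 0)) {..<Suc s}"
        proof -
          have e: "{..<Suc s} = insert s {..<s}" by auto
          have i1: "inj_on (\<lambda>i. \<chi> (lpt (LW' i) (LS' i) 0)) {..<s}"
            using inj unfolding inj_on_def using col by simp
          have i2: "\<chi> (lpt (LW' s) (LS' s) 0) \<notin> (\<lambda>i. \<chi> (lpt (LW' i) (LS' i) 0)) ` {..<s}"
            using False col by auto
          show ?thesis unfolding e using i1 i2 by (simp add: inj_on_insert)
        qed
        have "f' \<in> wds (Suc k) (n+m) \<and>
          (\<forall>i<Suc s. isline (Suc k) (n+m) (LW' i) (LS' i) \<and> lpt (LW' i) (LS' i) k = f' \<and>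
               (\<forall>t<k. \<chi> (lpt (LW' i) (LS' i) t) = \<chi> (lpt (LW' i) (LS' i) 0))) \<and>
          inj_on (\<lambda>i. \<chi> (lpt (LW' i) (LS' i) 0)) {..<Suc s}"
          using fin1 fin2 fin3 fin4 fin5 by blast
        then show ?thesis by blast
      qed
    qed
  qed
qed

lemma HJP_Suc: assumes "HJP k" "0 < k" shows "HJP (Suc k)"
  unfolding HJP_def
proof
  fix r :: nat
  obtain N where N: "\<And>\<chi>. (\<forall>w\<in>wds (Suc k) N. \<chi> w < r) \<Longrightarrow>
     (\<exists>w S. isline (Suc k) N w S \<and> (\<forall>t<Suc k. \<chi> (lpt w S t) = \<chi> (lpt w S 0))) \<or>
     (\<exists>f LW LS. f \<in> wds (Suc k) N \<and>
        (\<forall>i<r. isline (Suc k) N (LW i) (LS i) \<and> lpt (LW i) (LS i) k = f \<and>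
               (\<forall>t<k. \<chi> (lpt (LW i) (LS i) t) = \<chi> (lpt (LW i) (LS i) 0))) \<and>
        inj_on (\<lambda>i. \<chi> (lpt (LW i) (LS i) 0)) {..<r})"
    using focus[OF assms, of r r] by blast
  show "\<exists>N. \<forall>\<chi>. (\<forall>w\<in>wds (Suc k) N. \<chi> w < r) \<longrightarrow>
      (\<exists>w S. isline (Suc k) N w S \<and> (\<forall>t<Suc k. \<chi> (lpt w S t) = \<chi> (lpt w S 0)))"
  proof (rule exI[of _ N], intro allI impI)
    fix \<chi> :: "(nat \<Rightarrow> nat) \<Rightarrow> nat"
    assume cb: "\<forall>w\<in>wds (Suc k) N. \<chi> w < r"
    from N[OF cb] show "\<exists>w S. isline (Suc k) N w S \<and> (\<forall>t<Suc k. \<chi> (lpt w S t) = \<chi> (lpt w S 0))"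
    proof (elim disjE exE conjE)
      fix w S assume "isline (Suc k) N w S" "\<forall>t<Suc k. \<chi> (lpt w S t) = \<chi> (lpt w S 0)"
      then show ?thesis by blast
    next
      fix f LW LS
      assume f: "f \<in> wds (Suc k) N"
        and LL: "\<forall>i<r. isline (Suc k) N (LW i) (LS i) \<and> lpt (LW i) (LS i) k = f \<and>
               (\<forall>t<k. \<chi> (lpt (LW i) (LS i) t) = \<chi> (lpt (LW i) (LS i) 0))"
        and inj: "inj_on (\<lambda>i. \<chi> (lpt (LW i) (LS i) 0)) {..<r}"
      have LL1: "isline (Suc k) N (LW i) (LS i)" if "i < r" for i using LL that by blast
      have LL2: "lpt (LW i) (LS i) k = f" if "i < r" for i using LL that by blast
      have LL3: "\<chi> (lpt (LW i) (LS i) t) = \<chi> (lpt (LW i) (LS i) 0)" if "i < r" "t < k" for i t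
        using LL that by blast
      have sub: "(\<lambda>i. \<chi> (lpt (LW i) (LS i) 0)) ` {..<r} \<subseteq> {..<r}"
      proof
        fix y assume "y \<in> (\<lambda>i. \<chi> (lpt (LW i) (LS i) 0)) ` {..<r}"
        then obtain i where "i < r" "y = \<chi> (lpt (LW i) (LS i) 0)" by auto
        moreover have "lpt (LW i) (LS i) 0 \<in> wds (Suc k) N" using lpt_wds LL1 \<open>i<r\<close> by blast
        ultimately show "y \<in> {..<r}" using cb by simp
      qed
      have "(\<lambda>i. \<chi> (lpt (LW i) (LS i) 0)) ` {..<r} = {..<r}"
        by (rule endo_inj_surj[OF _ sub inj]) simp
      moreover have "\<chi> f \<in> {..<r}" using cb f by simp
      ultimately have "\<chi> f \<in> (\<lambda>i. \<chi> (lpt (LW i) (LS i) 0)) ` {..<r}" by simp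
      then obtain i where i: "i < r" "\<chi> f = \<chi> (lpt (LW i) (LS i) 0)" by auto
      have "\<forall>t<Suc k. \<chi> (lpt (LW i) (LS i) t) = \<chi> (lpt (LW i) (LS i) 0)"
      proof (intro allI impI)
        fix t assume "t < Suc k"
        then consider "t < k" | "t = k" by linarith
        then show "\<chi> (lpt (LW i) (LS i) t) = \<chi> (lpt (LW i) (LS i) 0)"
        proof cases
          case 1 then show ?thesis using LL3[OF i(1)] by blast
        next
          case 2 then show ?thesis using LL2[OF i(1)] i(2) by simp
        qed
      qed
      then show ?thesis using LL1 i(1) by blast
    qed
  qed
qed

lemma HJP_1: "HJP 1"
  unfolding HJP_def
proof
  fix r :: nat
  show "\<exists>N. \<forall>\<chi>. (\<forall>w\<in>wds 1 N. \<chi> w < r) \<longrightarrow>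
      (\<exists>w S. isline 1 N w S \<and> (\<forall>t<1. \<chi> (lpt w S t) = \<chi> (lpt w S 0)))"
    by (rule exI[of _ 1]) (auto simp: isline_def intro!: exI[of _ "{0}"] exI[of _ "\<lambda>_. 0"] zero_wds)
qed

lemma HJP_all: "0 < k \<Longrightarrow> HJP k"
proof (induction k)
  case 0 then show ?case by simp
next
  case (Suc k)
  show ?case
  proof (cases "k = 0")
    case True then show ?thesis using HJP_1 by simp
  next
    case False then show ?thesis using Suc HJP_Suc by simp
  qed
qed



definition pts :: "(nat \<Rightarrow> nat) \<Rightarrow> (nat \<Rightarrow> nat) \<Rightarrow> nat \<Rightarrow> (nat \<Rightarrow> nat \<Rightarrow> nat) set" where
  "pts kf Nf D = {g. (\<forall>j<D. g j \<in> wds (kf j) (Nf j)) \<and> (\<forall>j. D \<le> j \<longrightarrow> g j = (\<lambda>_. 0))}"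

definition spt :: "nat \<Rightarrow> (nat \<Rightarrow> nat \<Rightarrow> nat) \<Rightarrow> (nat \<Rightarrow> nat set) \<Rightarrow> (nat \<Rightarrow> nat) \<Rightarrow> nat \<Rightarrow> nat \<Rightarrow> nat" where
  "spt D W SS t = (\<lambda>j. if j < D then lpt (W j) (SS j) (t j) else (\<lambda>_. 0))"

definition loc :: "(nat \<Rightarrow> nat \<Rightarrow> (nat \<Rightarrow> nat \<Rightarrow> nat) \<Rightarrow> nat) \<Rightarrow> bool" where
  "loc \<Phi> \<longleftrightarrow> (\<forall>x j g g'. (\<forall>y<x. g y = g' y) \<and> (\<forall>i<j. g x i = g' x i) \<longrightarrow> \<Phi> x j g = \<Phi> x j g')"

lemma finite_pts: "finite (pts kf Nf D)"
proof -
  have "pts kf Nf D \<subseteq> (\<lambda>f j. if j < D then f j else (\<lambda>_. 0)) ` PiE {..<D} (\<lambda>j. wds (kf j) (Nf j))"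
  proof
    fix g assume g: "g \<in> pts kf Nf D"
    have "g = (\<lambda>j. if j < D then (restrict g {..<D}) j else (\<lambda>_. 0))"
      using g by (auto simp: pts_def)
    moreover have "restrict g {..<D} \<in> PiE {..<D} (\<lambda>j. wds (kf j) (Nf j))"
      using g by (auto simp: pts_def)
    ultimately show "g \<in> (\<lambda>f j. if j < D then f j else (\<lambda>_. 0)) ` PiE {..<D} (\<lambda>j. wds (kf j) (Nf j))"
      by blast
  qed
  then show ?thesis by (rule finite_subset) (auto intro!: finite_PiE finite_wds)
qed

lemma pts_upd: "g \<in> pts kf Nf D \<Longrightarrow> u \<in> wds (kf D) N \<Longrightarrow> g(D := u) \<in> pts kf (Nf(D := N)) (Suc D)"
  unfolding pts_def by auto

lemma pts_cong: "pts kf (Nf(D := N)) D = pts kf Nf D"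
  unfolding pts_def by auto

lemma pts_sub: "0 < kf D \<Longrightarrow> g \<in> pts kf Nf D \<Longrightarrow> g \<in> pts kf (Nf(D := N)) (Suc D)"
  unfolding pts_def using zero_wds by (auto simp: less_Suc_eq)

lemma spt_pts: "(\<forall>j<D. isline (kf j) (Nf j) (W j) (SS j)) \<Longrightarrow> (\<forall>j<D. t j < kf j) \<Longrightarrow>
   spt D W SS t \<in> pts kf Nf D"
  unfolding pts_def spt_def using lpt_wds by auto

lemma spt_Suc: "spt (Suc D) (W(D := w)) (SS(D := S)) t = (spt D W SS t)(D := lpt w S (t D))"
  unfolding spt_def by (rule ext) auto

lemma spt_0: "spt 0 W SS t = (\<lambda>_ _. 0)"
  unfolding spt_def by auto

lemma enc_arith: "(a::nat) < r \<Longrightarrow> c < b \<Longrightarrow> a + r * c < r * b \<and> (a + r * c) mod r = a \<and> (a + r * c) div r = c"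
proof -
  assume a: "a < r" and c: "c < b"
  have "a + r * c < r + r * c" using a by simp
  also have "\<dots> = r * Suc c" by simp
  also have "\<dots> \<le> r * b" using c by (intro mult_le_mono2) simp
  finally show ?thesis using a by simp
qed

lemma T:
  fixes kf :: "nat \<Rightarrow> nat" and b r :: nat
  assumes "\<forall>j<D. 0 < kf j"
  shows "\<exists>Nf. \<forall>\<psi> \<Phi>. (\<forall>g\<in>pts kf Nf D. \<psi> g < r) \<longrightarrow> (\<forall>x j g. g \<in> pts kf Nf D \<longrightarrow> \<Phi> x j g < b) \<longrightarrow> loc \<Phi> \<longrightarrow>
     (\<exists>W SS. (\<forall>j<D. isline (kf j) (Nf j) (W j) (SS j)) \<and>
        (\<exists>col. \<forall>t. (\<forall>j<D. t j < kf j) \<longrightarrow> \<psi> (spt D W SS t) = col) \<and>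
        (\<forall>x<D. \<exists>col. \<forall>t. (\<forall>j<D. t j < kf j) \<longrightarrow> \<Phi> x (Min (SS x)) (spt D W SS t) = col))"
  using assms
proof (induction D arbitrary: r)
  case 0
  show ?case by (rule exI[of _ "\<lambda>_. 0"]) (auto simp: spt_0)
next
  case (Suc D)
  then have kpos: "\<forall>j<D. 0 < kf j" "0 < kf D" by auto
  from Suc.IH[OF kpos(1), of "r * b"] obtain Nf where IH:
    "\<And>\<psi> \<Phi>. (\<forall>g\<in>pts kf Nf D. \<psi> g < r * b) \<Longrightarrow> (\<forall>x j g. g \<in> pts kf Nf D \<longrightarrow> \<Phi> x j g < b) \<Longrightarrow> loc \<Phi> \<Longrightarrow>
     (\<exists>W SS. (\<forall>j<D. isline (kf j) (Nf j) (W j) (SS j)) \<and>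
        (\<exists>col. \<forall>t. (\<forall>j<D. t j < kf j) \<longrightarrow> \<psi> (spt D W SS t) = col) \<and>
        (\<forall>x<D. \<exists>col. \<forall>t. (\<forall>j<D. t j < kf j) \<longrightarrow> \<Phi> x (Min (SS x)) (spt D W SS t) = col))"
    by blast
  define P where "P = pts kf Nf D"
  define R where "R = card (PiE P (\<lambda>_. {..<r}))"
  obtain N where HM: "\<And>\<chi> :: (nat\<Rightarrow>nat) \<Rightarrow> ((nat\<Rightarrow>nat\<Rightarrow>nat) \<Rightarrow> nat). card (\<chi> ` wds (kf D) N) \<le> R \<Longrightarrow>
      (\<exists>w S. isline (kf D) N w S \<and> (\<forall>t<kf D. \<chi> (lpt w S t) = \<chi> (lpt w S 0)))"
    using HJP_gen[OF HJP_all[OF kpos(2)], of R] by blast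
  define Nf' where "Nf' = Nf(D := N)"
  show ?case
  proof (rule exI[of _ Nf'], intro allI impI)
    fix \<psi> :: "(nat \<Rightarrow> nat \<Rightarrow> nat) \<Rightarrow> nat" and \<Phi> :: "nat \<Rightarrow> nat \<Rightarrow> (nat \<Rightarrow> nat \<Rightarrow> nat) \<Rightarrow> nat"
    assume \<psi>b: "\<forall>g\<in>pts kf Nf' (Suc D). \<psi> g < r"
      and \<Phi>b: "\<forall>x j g. g \<in> pts kf Nf' (Suc D) \<longrightarrow> \<Phi> x j g < b" and lc: "loc \<Phi>"
    have upd: "g(D := u) \<in> pts kf Nf' (Suc D)" if "g \<in> P" "u \<in> wds (kf D) N" for g u
      using pts_upd that unfolding P_def Nf'_def by blast
    define \<chi> where "\<chi> u = restrict (\<lambda>g. \<psi> (g(D := u))) P" for u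
    have sub: "\<chi> ` wds (kf D) N \<subseteq> PiE P (\<lambda>_. {..<r})"
      using upd \<psi>b unfolding \<chi>_def by auto
    have "finite P" unfolding P_def by (rule finite_pts)
    then have "card (\<chi> ` wds (kf D) N) \<le> R"
      unfolding R_def by (intro card_mono[OF _ sub] finite_PiE) auto
    from HM[OF this] obtain wM SM where M: "isline (kf D) N wM SM"
      "\<forall>t<kf D. \<chi> (lpt wM SM t) = \<chi> (lpt wM SM 0)" by blast
    define M0 where "M0 = lpt wM SM 0"
    define j0 where "j0 = Min SM"
    have M0w: "M0 \<in> wds (kf D) N" unfolding M0_def by (rule lpt_wds[OF M(1) kpos(2)])
    have Mc: "\<psi> (g(D := lpt wM SM t)) = \<psi> (g(D := M0))" if "g \<in> P" "t < kf D" for g t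
    proof -
      have "\<chi> (lpt wM SM t) = \<chi> (lpt wM SM 0)" using M(2) that(2) by blast
      then have "\<chi> (lpt wM SM t) g = \<chi> (lpt wM SM 0) g" by simp
      then show ?thesis using that(1) unfolding \<chi>_def M0_def by simp
    qed
    define \<psi>' where "\<psi>' g = \<psi> (g(D := M0)) + r * \<Phi> D j0 (g(D := M0))" for g
    have \<psi>'b: "\<forall>g\<in>pts kf Nf D. \<psi>' g < r * b"
    proof
      fix g assume "g \<in> pts kf Nf D"
      then have "g(D := M0) \<in> pts kf Nf' (Suc D)" using upd M0w unfolding P_def by blast
      then show "\<psi>' g < r * b" unfolding \<psi>'_def using \<psi>b \<Phi>b enc_arith by blast
    qed
    have \<Phi>b': "\<forall>x j g. g \<in> pts kf Nf D \<longrightarrow> \<Phi> x j g < b"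
      using \<Phi>b pts_sub[of kf D, OF kpos(2)] unfolding Nf'_def by blast
    from IH[OF \<psi>'b \<Phi>b' lc] obtain W SS col' where
      L: "\<forall>j<D. isline (kf j) (Nf j) (W j) (SS j)" and
      C: "\<forall>t. (\<forall>j<D. t j < kf j) \<longrightarrow> \<psi>' (spt D W SS t) = col'" and
      CX: "\<forall>x<D. \<exists>col. \<forall>t. (\<forall>j<D. t j < kf j) \<longrightarrow> \<Phi> x (Min (SS x)) (spt D W SS t) = col"
      by blast
    define W' where "W' = W(D := wM)"
    define SS' where "SS' = SS(D := SM)"
    have tb: "\<forall>j<D. t j < kf j" if "\<forall>j<Suc D. t j < kf j" for t using that by simp
    have inP: "spt D W SS t \<in> P" if "\<forall>j<D. t j < kf j" for t
      unfolding P_def by (rule spt_pts[OF L that])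
    have big: "spt (Suc D) W' SS' t = (spt D W SS t)(D := lpt wM SM (t D))" for t
      unfolding W'_def SS'_def by (rule spt_Suc)
    have dec: "\<psi> ((spt D W SS t)(D := M0)) = col' mod r \<and> \<Phi> D j0 ((spt D W SS t)(D := M0)) = col' div r"
      if "\<forall>j<D. t j < kf j" for t
    proof -
      have g1: "(spt D W SS t)(D := M0) \<in> pts kf Nf' (Suc D)" using upd[OF inP[OF that] M0w] .
      have "\<psi>' (spt D W SS t) = col'" using C that by blast
      then show ?thesis unfolding \<psi>'_def using enc_arith[of _ r _ b] \<psi>b \<Phi>b g1 by metis
    qed
    have locD: "\<Phi> D j0 ((spt D W SS t)(D := lpt wM SM u)) = \<Phi> D j0 ((spt D W SS t)(D := M0))" for t u
    proof -
      have "\<forall>i<j0. lpt wM SM u i = M0 i"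
      proof (intro allI impI)
        fix i assume "i < j0"
        have fSM: "finite SM" using M(1) unfolding isline_def by (meson finite_lessThan finite_subset)
        then have "i \<notin> SM" using \<open>i < j0\<close> unfolding j0_def by (metis Min_le leD)
        then show "lpt wM SM u i = M0 i" unfolding M0_def lpt_def by simp
      qed
      then show ?thesis using lc unfolding loc_def by auto
    qed
    show "\<exists>W SS. (\<forall>j<Suc D. isline (kf j) (Nf' j) (W j) (SS j)) \<and>
        (\<exists>col. \<forall>t. (\<forall>j<Suc D. t j < kf j) \<longrightarrow> \<psi> (spt (Suc D) W SS t) = col) \<and>
        (\<forall>x<Suc D. \<exists>col. \<forall>t. (\<forall>j<Suc D. t j < kf j) \<longrightarrow> \<Phi> x (Min (SS x)) (spt (Suc D) W SS t) = col)"
    proof (rule exI[of _ W'], rule exI[of _ SS'], intro conjI)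
      show "\<forall>j<Suc D. isline (kf j) (Nf' j) (W' j) (SS' j)"
        using L M(1) unfolding W'_def SS'_def Nf'_def by (auto simp: less_Suc_eq)
      show "\<exists>col. \<forall>t. (\<forall>j<Suc D. t j < kf j) \<longrightarrow> \<psi> (spt (Suc D) W' SS' t) = col"
      proof (intro exI allI impI)
        fix t assume t: "\<forall>j<Suc D. t j < kf j"
        have "\<psi> (spt (Suc D) W' SS' t) = \<psi> ((spt D W SS t)(D := M0))"
          unfolding big using Mc[OF inP[OF tb[OF t]]] t by simp
        also have "\<dots> = col' mod r" using dec[OF tb[OF t]] by blast
        finally show "\<psi> (spt (Suc D) W' SS' t) = col' mod r" .
      qed
      show "\<forall>x<Suc D. \<exists>col. \<forall>t. (\<forall>j<Suc D. t j < kf j) \<longrightarrow> \<Phi> x (Min (SS' x)) (spt (Suc D) W' SS' t) = col"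
      proof (intro allI impI)
        fix x assume x: "x < Suc D"
        show "\<exists>col. \<forall>t. (\<forall>j<Suc D. t j < kf j) \<longrightarrow> \<Phi> x (Min (SS' x)) (spt (Suc D) W' SS' t) = col"
        proof (cases "x = D")
          case True
          show ?thesis
          proof (intro exI allI impI)
            fix t assume t: "\<forall>j<Suc D. t j < kf j"
            have e1: "Min (SS' x) = j0" unfolding SS'_def j0_def True by simp
            have "\<Phi> x (Min (SS' x)) (spt (Suc D) W' SS' t) = \<Phi> D j0 ((spt D W SS t)(D := lpt wM SM (t D)))"
              using e1 big[of t] True by simp
            also have "\<dots> = \<Phi> D j0 ((spt D W SS t)(D := M0))" by (rule locD)
            also have "\<dots> = col' div r" using dec[OF tb[OF t]] by blast
            finally show "\<Phi> x (Min (SS' x)) (spt (Suc D) W' SS' t) = col' div r" .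
          qed
        next
          case False
          then have xD: "x < D" using x by simp
          from CX xD obtain col where col: "\<forall>t. (\<forall>j<D. t j < kf j) \<longrightarrow> \<Phi> x (Min (SS x)) (spt D W SS t) = col"
            by blast
          show ?thesis
          proof (intro exI allI impI)
            fix t assume t: "\<forall>j<Suc D. t j < kf j"
            have "\<Phi> x (Min (SS' x)) (spt (Suc D) W' SS' t) = \<Phi> x (Min (SS x)) (spt D W SS t)"
            proof -
              have "SS' x = SS x" unfolding SS'_def using xD by simp
              moreover have "\<forall>y<x. spt (Suc D) W' SS' t y = spt D W SS t y"
                unfolding big using xD by auto
              moreover have "\<forall>i<Min (SS x). spt (Suc D) W' SS' t x i = spt D W SS t x i"
                unfolding big using xD by auto
              ultimately show ?thesis using lc unfolding loc_def by metis
            qed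
            also have "\<dots> = col" using col tb[OF t] by blast
            finally show "\<Phi> x (Min (SS' x)) (spt (Suc D) W' SS' t) = col" .
          qed
        qed
      qed
    qed
  qed
qed



lemma dm1: "r < m \<Longrightarrow> (x*m + r) div (m::nat) = x" by simp
lemma dm2: "r < m \<Longrightarrow> (x*m + r) mod (m::nat) = r" by simp
lemma decomp: "(a::nat) \<le> z \<Longrightarrow> z = a + ((z-a) div m)*m + (z-a) mod m" by simp
lemma divlt: "(a::nat) \<le> z \<Longrightarrow> z < a + l*m \<Longrightarrow> (z-a) div m < l"
  using less_mult_imp_div_less[of "z-a" l m] by simp
lemma sealpos:
  fixes a z x jj m :: nat
  assumes "a \<le> z" "z < a + x*m + jj" "jj \<le> m"
  shows "(z-a) div m < x \<or> ((z-a) div m = x \<and> (z-a) mod m < jj)"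
proof -
  define q where "q = (z-a) div m"
  define r where "r = (z-a) mod m"
  have e: "z - a = q*m + r" unfolding q_def r_def by simp
  have lt: "q*m + r < x*m + jj" using e assms by linarith
  show ?thesis
  proof (cases "q \<le> x")
    case True
    show ?thesis
    proof (cases "q = x")
      case True then show ?thesis using lt q_def r_def by simp
    next
      case False then show ?thesis using \<open>q \<le> x\<close> q_def by simp
    qed
  next
    case False
    then have "Suc x \<le> q" by simp
    then have "Suc x * m \<le> q * m" by (rule mult_le_mono1)
    then show ?thesis using lt assms(3) by simp
  qed
qed

definition plainmap :: "nat \<Rightarrow> nat \<Rightarrow> nat \<Rightarrow> (nat \<Rightarrow> nat \<Rightarrow> nat) \<Rightarrow> nat \<rightharpoonup> nat" where
 "plainmap a l m G z = (if z < a then Some z else if z < a + l*m then Some (G ((z-a) div m) ((z-a) mod m)) else None)"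
definition sealmap :: "nat \<Rightarrow> nat \<Rightarrow> (nat \<Rightarrow> nat \<Rightarrow> nat) \<Rightarrow> nat \<Rightarrow> nat \<Rightarrow> nat \<rightharpoonup> nat" where
 "sealmap a m G x jj z = (if z < a then Some z else if z < a + x*m + jj then Some (G ((z-a) div m) ((z-a) mod m))
    else if z = a + x*m + jj then Some a else None)"
definition pmap :: "nat \<Rightarrow> nat \<Rightarrow> nat \<Rightarrow> (nat \<Rightarrow> nat \<Rightarrow> nat) \<Rightarrow> (nat \<Rightarrow> nat set) \<Rightarrow> nat \<rightharpoonup> nat" where
 "pmap a l m WG SG z = (if z < a then Some z else if z < a + l*m then
    (if (z-a) mod m \<in> SG ((z-a) div m) then Some (a + (z-a) div m) else Some (WG ((z-a) div m) ((z-a) mod m)))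
    else None)"

lemma plain_rs: "(\<forall>x<l. \<forall>r. G x r < a) \<Longrightarrow> rigid_surj a (l*m) (plainmap a l m G)"
  unfolding rigid_surj_def
proof (intro conjI allI impI)
  show "dom (plainmap a l m G) = {..<a + l * m}" unfolding plainmap_def dom_def by auto
  show "\<And>z. z < a \<Longrightarrow> plainmap a l m G z = Some z" unfolding plainmap_def by simp
  fix z assume G: "\<forall>x<l. \<forall>r. G x r < a" and z: "a \<le> z \<and> z < a + l * m"
  then have "(z-a) div m < l" using divlt by blast
  then show "\<exists>w<a. plainmap a l m G z = Some w" using G z unfolding plainmap_def by auto
qed

lemma seal_srs: "jj < m \<Longrightarrow> (\<forall>x'\<le>x. \<forall>r. G x' r < a) \<Longrightarrow> sealed_rigid_surj a (x*m+jj) (sealmap a m G x jj)"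
  unfolding sealed_rigid_surj_def
proof (intro conjI allI impI)
  show "dom (sealmap a m G x jj) = {..a + (x * m + jj)}" unfolding sealmap_def dom_def by auto
  show "\<And>z. z < a \<Longrightarrow> sealmap a m G x jj z = Some z" unfolding sealmap_def by simp
  show "sealmap a m G x jj (a + (x * m + jj)) = Some a" unfolding sealmap_def by simp
  fix z assume jj: "jj < m" and G: "\<forall>x'\<le>x. \<forall>r. G x' r < a" and z: "a \<le> z \<and> z < a + (x * m + jj)"
  then have "(z-a) div m \<le> x" using sealpos[of a z x m jj] by auto
  then show "\<exists>w<a. sealmap a m G x jj z = Some w" using G z unfolding sealmap_def by auto
qed

lemma pmap_propP:
  assumes m: "0 < m" and S: "\<forall>x<l. SG x \<noteq> {} \<and> SG x \<subseteq> {..<m}" and WG: "\<forall>x<l. \<forall>r. WG x r < a"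
  shows "propP a l m (pmap a l m WG SG)"
  unfolding propP_def
proof (intro conjI allI impI)
  show "dom (pmap a l m WG SG) = {..<a + l * m}" unfolding pmap_def dom_def by auto
  show "\<And>z. z < a \<Longrightarrow> pmap a l m WG SG z = Some z" unfolding pmap_def by simp
  fix x assume x: "x < l"
  have fin: "finite (SG x)" using S x by (meson finite_lessThan finite_subset)
  have Mi: "Min (SG x) \<in> SG x" "Min (SG x) < m" using S x fin Min_in by auto
  have xm: "a + x*m + Min (SG x) < a + l*m"
  proof -
    have "x*m + Min (SG x) < x*m + m" using Mi by simp
    also have "\<dots> = Suc x * m" by simp
    also have "\<dots> \<le> l * m" using x by (intro mult_le_mono1) simp
    finally show ?thesis by simp
  qed
  show "\<exists>i<m. pmap a l m WG SG (a + x * m + i) = Some (a + x)"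
    using Mi xm unfolding pmap_def by (intro exI[of _ "Min (SG x)"]) simp
  fix i assume i: "i < m"
  have xm2: "a + x*m + i < a + l*m"
  proof -
    have "x*m + i < x*m + m" using i by simp
    also have "\<dots> = Suc x * m" by simp
    also have "\<dots> \<le> l * m" using x by (intro mult_le_mono1) simp
    finally show ?thesis by simp
  qed
  show "\<exists>w. pmap a l m WG SG (a + x * m + i) = Some w \<and> (w < a \<or> w = a + x)"
    using xm2 i WG x unfolding pmap_def by auto
qed

lemma plain_comp:
  assumes r: "rigid_surj a l r" and WG: "\<forall>x<l. \<forall>r'. WG x r' < a"
    and G: "\<forall>x<l. G x = lpt (WG x) (SG x) (the (r (a+x)))"
  shows "plainmap a l m G = r \<circ>\<^sub>m pmap a l m WG SG"
proof (rule ext)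
  fix z
  show "plainmap a l m G z = (r \<circ>\<^sub>m pmap a l m WG SG) z"
  proof (cases "z < a")
    case True
    then have "r z = Some z" using r unfolding rigid_surj_def by blast
    then show ?thesis using True unfolding plainmap_def pmap_def map_comp_def by simp
  next
    case False
    show ?thesis
    proof (cases "z < a + l*m")
      case True
      define x' where "x' = (z-a) div m"
      define r' where "r' = (z-a) mod m"
      have x'l: "x' < l" unfolding x'_def using divlt False True by simp
      have "\<forall>z. a \<le> z \<and> z < a + l \<longrightarrow> (\<exists>w<a. r z = Some w)" using r unfolding rigid_surj_def by blast
      then have "\<exists>w<a. r (a+x') = Some w" by (rule allE[of _ "a+x'"]) (simp add: x'l)
      then obtain w where w: "w < a" "r (a + x') = Some w" by blast
      have Gx: "G x' r' = (if r' \<in> SG x' then w else WG x' r')"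
        using G x'l w unfolding lpt_def by simp
      have rW: "r (WG x' r') = Some (WG x' r')" using r WG x'l unfolding rigid_surj_def by blast
      show ?thesis
        using False True Gx w rW unfolding plainmap_def pmap_def map_comp_def x'_def[symmetric] r'_def[symmetric]
        by simp
    next
      case False2: False
      then show ?thesis using False unfolding plainmap_def pmap_def map_comp_def by simp
    qed
  qed
qed

lemma pmap_least:
  assumes x: "x<l" and S: "\<forall>x<l. SG x \<noteq> {} \<and> SG x \<subseteq> {..<m}" and WG: "\<forall>x<l. \<forall>r. WG x r < a"
  shows "(LEAST z. pmap a l m WG SG z = Some (a+x)) = a + x*m + Min (SG x)"
proof -
  have fin: "finite (SG x)" using S x by (meson finite_lessThan finite_subset)
  have Mi: "Min (SG x) \<in> SG x" "Min (SG x) < m" using S x fin Min_in by auto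
  have xm: "a + x*m + Min (SG x) < a + l*m"
  proof -
    have "x*m + Min (SG x) < x*m + m" using Mi by simp
    also have "\<dots> = Suc x * m" by simp
    also have "\<dots> \<le> l * m" using x by (intro mult_le_mono1) simp
    finally show ?thesis by simp
  qed
  show ?thesis
  proof (rule Least_equality)
    show "pmap a l m WG SG (a + x*m + Min (SG x)) = Some (a+x)"
      using Mi xm unfolding pmap_def by simp
    fix y assume y: "pmap a l m WG SG y = Some (a + x)"
    show "a + x*m + Min (SG x) \<le> y"
    proof (rule ccontr)
      assume "\<not> a + x*m + Min (SG x) \<le> y"
      then have lt: "y < a + x*m + Min (SG x)" by simp
      have ya: "a \<le> y"
      proof (rule ccontr)
        assume "\<not> a \<le> y"
        then have "pmap a l m WG SG y = Some y" unfolding pmap_def by simp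
        then show False using y \<open>\<not> a \<le> y\<close> by simp
      qed
      define x' where "x' = (y-a) div m"
      define r' where "r' = (y-a) mod m"
      have yl: "y < a + l*m" using lt xm by simp
      have sp: "x' < x \<or> (x' = x \<and> r' < Min (SG x))"
        using sealpos[OF ya lt] Mi unfolding x'_def r'_def by simp
      then have x'l: "x' < l" using x by auto
      show False
      proof (cases "r' \<in> SG x'")
        case True
        then have "pmap a l m WG SG y = Some (a + x')"
          using ya yl unfolding pmap_def x'_def[symmetric] r'_def[symmetric] by simp
        then have "x' = x" using y by simp
        then show False using sp True Min_le[OF fin] by fastforce
      next
        case False
        then have "pmap a l m WG SG y = Some (WG x' r')"
          using ya yl unfolding pmap_def x'_def[symmetric] r'_def[symmetric] by simp
        then have "WG x' r' = a + x" using y by simp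
        moreover have "WG x' r' < a" using WG x'l by blast
        ultimately show False by simp
      qed
    qed
  qed
qed

lemma seal_comp:
  assumes x: "x<l" and r: "sealed_rigid_surj a x r"
    and S: "\<forall>x<l. SG x \<noteq> {} \<and> SG x \<subseteq> {..<m}" and WG: "\<forall>x<l. \<forall>r. WG x r < a"
    and Glo: "\<forall>x'<x. G x' = lpt (WG x') (SG x') (the (r (a+x')))"
    and Gx: "\<forall>r'<Min (SG x). G x r' = WG x r'"
  shows "sealmap a m G x (Min (SG x)) = r \<circ>\<^sub>m p_up a (pmap a l m WG SG) x"
proof (rule ext)
  fix z
  define Z where "Z = a + x*m + Min (SG x)"
  have fin: "finite (SG x)" using S x by (meson finite_lessThan finite_subset)
  have Mi: "Min (SG x) \<in> SG x" "Min (SG x) < m" using S x fin Min_in by auto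
  have xm: "Z < a + l*m"
  proof -
    have "x*m + Min (SG x) < x*m + m" using Mi by simp
    also have "\<dots> = Suc x * m" by simp
    also have "\<dots> \<le> l * m" using x by (intro mult_le_mono1) simp
    finally show ?thesis unfolding Z_def by simp
  qed
  have pu: "p_up a (pmap a l m WG SG) x = pmap a l m WG SG |` {..Z}"
    unfolding p_up_def Z_def using pmap_least[OF x S WG] by simp
  have rl: "r z = Some z" if "z < a" for z using r that unfolding sealed_rigid_surj_def by blast
  have rt: "r (a + x) = Some a" using r unfolding sealed_rigid_surj_def by blast
  show "sealmap a m G x (Min (SG x)) z = (r \<circ>\<^sub>m p_up a (pmap a l m WG SG) x) z"
  proof -
    consider (A) "z < a" | (B) "a \<le> z" "z < Z" | (C) "z = Z" | (D) "Z < z" by linarith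
    then show ?thesis
    proof cases
      case A
      have "z \<le> Z" using A unfolding Z_def by simp
      then show ?thesis using A rl[OF A] unfolding pu sealmap_def pmap_def map_comp_def by simp
    next
      case B
      define x' where "x' = (z-a) div m"
      define r' where "r' = (z-a) mod m"
      have sp: "x' < x \<or> (x' = x \<and> r' < Min (SG x))"
        using sealpos[OF B(1) B(2)[unfolded Z_def]] Mi unfolding x'_def r'_def by simp
      have x'l: "x' < l" using sp x by auto
      have zl: "z < a + l*m" using B xm by simp
      have lhs: "sealmap a m G x (Min (SG x)) z = Some (G x' r')"
        using B unfolding sealmap_def Z_def x'_def r'_def by simp
      have rhs: "(r \<circ>\<^sub>m p_up a (pmap a l m WG SG) x) z =
          (if r' \<in> SG x' then r (a + x') else r (WG x' r'))"
        using B zl unfolding pu map_comp_def pmap_def by (simp add: x'_def r'_def)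
      have rW: "r (WG x' r') = Some (WG x' r')" using rl WG x'l by blast
      show ?thesis
      proof (cases "x' < x")
        case True
        have "\<forall>z. a \<le> z \<and> z < a + x \<longrightarrow> (\<exists>w<a. r z = Some w)" using r unfolding sealed_rigid_surj_def by blast
        then have "\<exists>w<a. r (a+x') = Some w" by (rule allE[of _ "a+x'"]) (simp add: True)
        then obtain w where w: "w < a" "r (a + x') = Some w" by blast
        have "G x' r' = (if r' \<in> SG x' then w else WG x' r')"
          using Glo True w unfolding lpt_def by simp
        then show ?thesis using lhs rhs w rW by simp
      next
        case False
        then have e: "x' = x" "r' < Min (SG x)" using sp by auto
        then have "r' \<notin> SG x" using Min_le[OF fin] by fastforce
        then show ?thesis using lhs rhs rW e Gx by simp
      qed
    next
      case C
      then show ?thesis unfolding pu sealmap_def map_comp_def pmap_def Z_def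
        using xm Mi rt unfolding Z_def by simp
    next
      case D
      then show ?thesis unfolding pu sealmap_def map_comp_def Z_def by auto
    qed
  qed
qed

lemma seal_loc:
  assumes "\<forall>x'<x. G x' = G' x'" "\<forall>r'<jj. G x r' = G' x r'" "jj \<le> m"
  shows "sealmap a m G x jj = sealmap a m G' x jj"
proof (rule ext)
  fix z
  show "sealmap a m G x jj z = sealmap a m G' x jj z"
  proof (cases "a \<le> z \<and> z < a + x*m + jj")
    case True
    then have "(z-a) div m < x \<or> ((z-a) div m = x \<and> (z-a) mod m < jj)"
      using sealpos assms(3) by blast
    then have "G ((z-a) div m) ((z-a) mod m) = G' ((z-a) div m) ((z-a) mod m)" using assms by auto
    then show ?thesis unfolding sealmap_def by simp
  next
    case False
    then show ?thesis unfolding sealmap_def by auto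
  qed
qed



lemma plainmap_cong: "(\<forall>x'<l. G x' = G' x') \<Longrightarrow> plainmap a l m G = plainmap a l m G'"
proof (rule ext)
  fix z assume G: "\<forall>x'<l. G x' = G' x'"
  show "plainmap a l m G z = plainmap a l m G' z"
  proof (cases "a \<le> z \<and> z < a + l*m")
    case True
    then have "(z-a) div m < l" using divlt by blast
    then show ?thesis using G unfolding plainmap_def by simp
  next
    case False then show ?thesis unfolding plainmap_def by auto
  qed
qed

lemma wv: "w \<in> wds k N \<Longrightarrow> 0 < k \<Longrightarrow> w r < k"
  unfolding wds_def by (cases "r < N") auto

lemma gv: "g \<in> pts kf Nf D \<Longrightarrow> j < D \<Longrightarrow> 0 < kf j \<Longrightarrow> g j r < kf j"
  unfolding pts_def using wv by blast

theorem lemma4p9: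
  fixes b :: nat and as ls :: "nat list"
  assumes "b > 0"
    and "length ls = length as"
    and "as \<noteq> []"
    and "\<forall>a\<in>set as. 0 < a"
  shows "\<exists>m::nat. \<forall>c :: (nat \<rightharpoonup> nat) list \<Rightarrow> nat.
           (\<forall>s. admissible as ls m s \<longrightarrow> c s < b) \<longrightarrow>
           (\<exists>ps :: (nat \<rightharpoonup> nat) list. length ps = length as \<and>
              (\<forall>i<length as. propP (as!i) (ls!i) m (ps!i)) \<and>
              (\<forall>x < ls!0. \<exists>col. \<forall>rs :: (nat \<rightharpoonup> nat) list.
                  length rs = length as \<and>
                  sealed_rigid_surj (as!0) x (rs!0) \<and>
                  (\<forall>i. 1 \<le> i \<and> i < length as \<longrightarrow> rigid_surj (as!i) (ls!i) (rs!i))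
                  \<longrightarrow> c (map (\<lambda>i. if i = 0 then rs!0 \<circ>\<^sub>m p_up (as!0) (ps!0) x
                                  else rs!i \<circ>\<^sub>m ps!i) [0..<length as]) = col))"
proof -
  define n where "n = length as"
  have n0: "0 < n" using assms(3) by (simp add: n_def)
  define Lm where "Lm = Suc (sum_list ls)"
  have lLm: "ls!i < Lm" if "i < n" for i
    using elem_le_sum_list[of i ls] that assms(2) unfolding Lm_def n_def by simp
  have Lm0: "0 < Lm" unfolding Lm_def by simp
  define D where "D = n * Lm"
  define crd where "crd j = (j div Lm + 1) mod n" for j
  define idx where "idx i x = ((i + n - 1) mod n) * Lm + x" for i x
  define kf where "kf j = as ! crd j" for j
  have crdn: "crd j < n" for j unfolding crd_def using n0 by simp
  have apos: "0 < as!i" if "i < n" for i using assms(4) that unfolding n_def by simp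
  have kpos: "\<forall>j<D. 0 < kf j" unfolding kf_def using apos crdn by blast
  have idx_lt: "idx i x < D" if "x < Lm" for i x
  proof -
    have q: "(i + n - 1) mod n < n" using n0 by simp
    have "idx i x < ((i + n - 1) mod n) * Lm + Lm" unfolding idx_def using that by simp
    also have "\<dots> = Suc ((i + n - 1) mod n) * Lm" by simp
    also have "\<dots> \<le> n * Lm" using q by (intro mult_le_mono1) simp
    finally show ?thesis unfolding D_def .
  qed
  have div_idx: "idx i x div Lm = (i + n - 1) mod n" if "x < Lm" for i x
    unfolding idx_def using that by simp
  have mod_idx: "idx i x mod Lm = x" if "x < Lm" for i x
    unfolding idx_def using that by simp
  have crd_idx: "crd (idx i x) = i" if "i < n" "x < Lm" for i x
  proof -
    have "crd (idx i x) = ((i + n - 1) mod n + 1) mod n" unfolding crd_def div_idx[OF that(2)] ..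
    also have "\<dots> = (i + n - 1 + 1) mod n" by (simp add: mod_Suc_eq)
    also have "\<dots> = (i + n) mod n" using n0 by simp
    also have "\<dots> = i" using that(1) by simp
    finally show ?thesis .
  qed
  have kf_idx: "kf (idx i x) = as!i" if "i < n" "x < Lm" for i x
    unfolding kf_def crd_idx[OF that] ..
  have div_idx0: "idx 0 x div Lm = n - 1" if "x < Lm" for x
    using div_idx[OF that, of 0] n0 by simp
  have idx0: "idx 0 x = (n - 1) * Lm + x" for x
    unfolding idx_def using n0 by simp
  have idx_lt0: "idx i x' < idx 0 x" if "1 \<le> i" "i < n" "x' < Lm" for i x' x
  proof -
    have e1: "i + n - 1 = (i - 1) + n" using that(1) by simp
    have e2: "(i + n - 1) mod n = i - 1" unfolding e1 using that(2) by simp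
    have e: "idx i x' = (i - 1) * Lm + x'" unfolding idx_def e2 ..
    have "(i - 1) * Lm + x' < (i - 1) * Lm + Lm" using that(3) by simp
    also have "\<dots> = i * Lm" using that(1) by (cases i) auto
    also have "\<dots> \<le> (n - 1) * Lm" using that(2) by (intro mult_le_mono1) simp
    finally show ?thesis unfolding e idx0 by simp
  qed
  from T[where kf=kf and D=D and b=b and r=1, OF kpos] obtain Nf where TT:
    "\<forall>\<psi> \<Phi>. (\<forall>g\<in>pts kf Nf D. \<psi> g < (1::nat)) \<longrightarrow> (\<forall>x j g. g \<in> pts kf Nf D \<longrightarrow> \<Phi> x j g < b) \<longrightarrow> loc \<Phi> \<longrightarrow>
     (\<exists>W SS. (\<forall>j<D. isline (kf j) (Nf j) (W j) (SS j)) \<and>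
        (\<exists>col. \<forall>t. (\<forall>j<D. t j < kf j) \<longrightarrow> \<psi> (spt D W SS t) = col) \<and>
        (\<forall>x<D. \<exists>col. \<forall>t. (\<forall>j<D. t j < kf j) \<longrightarrow> \<Phi> x (Min (SS x)) (spt D W SS t) = col))"
    ..
  define m where "m = (\<Sum>j<D. Nf j) + 1"
  have m0: "0 < m" unfolding m_def by simp
  have Nfm: "Nf j < m" if "j < D" for j
  proof -
    have "Nf j \<le> (\<Sum>j<D. Nf j)" using that by (intro member_le_sum) auto
    then show ?thesis unfolding m_def by simp
  qed
  show ?thesis
  proof (rule exI[of _ m], intro allI impI)
    fix c :: "(nat \<rightharpoonup> nat) list \<Rightarrow> nat"
    assume cb: "\<forall>s. admissible as ls m s \<longrightarrow> c s < b"
    define G where "G g i = (\<lambda>x. g (idx i x))" for g :: "nat \<Rightarrow> nat \<Rightarrow> nat" and i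
    define tup where "tup g x jj = map (\<lambda>i. if i = 0 then sealmap (as!0) m (G g 0) x jj
        else plainmap (as!i) (ls!i) m (G g i)) [0..<n]" for g x jj
    define \<Phi> where "\<Phi> j jj g = (if j div Lm = n - 1 \<and> j mod Lm < ls!0 \<and> jj < m then c (tup g (j mod Lm) jj) else 0)"
      for j jj g
    have Gv: "G g i x r < as!i" if "g \<in> pts kf Nf D" "i < n" "x < Lm" for g i x r
    proof -
      have "g (idx i x) r < kf (idx i x)" using gv[OF that(1) idx_lt[OF that(3)]] kpos idx_lt[OF that(3)] by blast
      then show ?thesis unfolding G_def using kf_idx[OF that(2,3)] by simp
    qed
    have adm: "admissible as ls m (tup g x jj)" if g: "g \<in> pts kf Nf D" and x: "x < ls!0" and jj: "jj < m" for g x jj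
      unfolding admissible_def
    proof (intro conjI allI impI)
      show "length (tup g x jj) = length as" unfolding tup_def n_def by simp
      have t0: "tup g x jj ! 0 = sealmap (as!0) m (G g 0) x jj" unfolding tup_def using n0 by simp
      have "x*m + jj < ls!0 * m"
      proof -
        have "x*m + jj < x*m + m" using jj by simp
        also have "\<dots> = Suc x * m" by simp
        also have "\<dots> \<le> ls!0 * m" using x by (intro mult_le_mono1) simp
        finally show ?thesis .
      qed
      moreover have "sealed_rigid_surj (as!0) (x*m+jj) (tup g x jj ! 0)"
        unfolding t0 using lLm[OF n0] x Gv[OF g n0] by (intro seal_srs[OF jj]) auto
      ultimately show "\<exists>y<ls!0 * m. sealed_rigid_surj (as!0) y (tup g x jj ! 0)" by blast
      fix i assume i: "1 \<le> i \<and> i < length as"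
      then have ti: "tup g x jj ! i = plainmap (as!i) (ls!i) m (G g i)" unfolding tup_def n_def by simp
      show "rigid_surj (as!i) (ls!i * m) (tup g x jj ! i)"
        unfolding ti using i lLm Gv[OF g] unfolding n_def by (intro plain_rs) (meson less_trans)
    qed
    have \<Phi>b: "\<forall>x j g. g \<in> pts kf Nf D \<longrightarrow> \<Phi> x j g < b"
      unfolding \<Phi>_def using adm cb assms(1) by auto
    have lc: "loc \<Phi>" unfolding loc_def
    proof (intro allI impI)
      fix j jj :: nat and g g' :: "nat \<Rightarrow> nat \<Rightarrow> nat" assume ag: "(\<forall>y<j. g y = g' y) \<and> (\<forall>i<jj. g j i = g' j i)"
      show "\<Phi> j jj g = \<Phi> j jj g'"
      proof (cases "j div Lm = n - 1 \<and> j mod Lm < ls!0 \<and> jj < m")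
        case False then show ?thesis by (auto simp: \<Phi>_def)
        next
        case True
        define x where "x = j mod Lm"
        have jjm: "jj < m" using True by simp
        have xL: "x < Lm" unfolding x_def using Lm0 by simp
        have jx: "j = idx 0 x" unfolding idx0 x_def using True by (metis div_mult_mod_eq)
        have "tup g x jj = tup g' x jj" unfolding tup_def
        proof (rule map_cong[OF refl])
          fix i assume "i \<in> set [0..<n]"
          then have i: "i < n" by simp
          show "(if i = 0 then sealmap (as!0) m (G g 0) x jj else plainmap (as!i) (ls!i) m (G g i)) =
                (if i = 0 then sealmap (as!0) m (G g' 0) x jj else plainmap (as!i) (ls!i) m (G g' i))"
          proof (cases "i = 0")
            case True
            have a1: "\<forall>x'<x. G g 0 x' = G g' 0 x'"
            proof (intro allI impI)
              fix x' assume "x' < x"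
              then have "idx 0 x' < j" unfolding jx idx0 by simp
              then show "G g 0 x' = G g' 0 x'" using ag unfolding G_def by simp
            qed
            have a2: "\<forall>r'<jj. G g 0 x r' = G g' 0 x r'" using ag unfolding G_def jx by simp
            show ?thesis using seal_loc[OF a1 a2] jjm True by (simp add: less_imp_le)
          next
            case False
            have "\<forall>x'<ls!i. G g i x' = G g' i x'"
            proof (intro allI impI)
              fix x' assume "x' < ls!i"
              then have "idx i x' < j" unfolding jx using idx_lt0[of i x' x] False i lLm[OF i] by simp
              then show "G g i x' = G g' i x'" using ag unfolding G_def by simp
            qed
            then show ?thesis using False plainmap_cong by simp
          qed
        qed
        then show ?thesis unfolding \<Phi>_def x_def by simp
      qed
    qed
    have \<psi>b: "\<forall>g\<in>pts kf Nf D. (\<lambda>_. 0::nat) g < 1" by simp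
    from mp[OF mp[OF mp[OF spec[OF spec[OF TT, of "\<lambda>_. 0"], of \<Phi>] \<psi>b] \<Phi>b] lc] obtain W SS where
      L: "\<forall>j<D. isline (kf j) (Nf j) (W j) (SS j)" and
      CX: "\<forall>x<D. \<exists>col. \<forall>t. (\<forall>j<D. t j < kf j) \<longrightarrow> \<Phi> x (Min (SS x)) (spt D W SS t) = col"
      by blast
    define WG where "WG i = (\<lambda>x. W (idx i x))" for i
    define SG where "SG i = (\<lambda>x. SS (idx i x))" for i
    define ps where "ps = map (\<lambda>i. pmap (as!i) (ls!i) m (WG i) (SG i)) [0..<n]"
    have psi: "ps!i = pmap (as!i) (ls!i) m (WG i) (SG i)" if "i < n" for i
      unfolding ps_def using that by simp
    have SGp: "\<forall>x<ls!i. SG i x \<noteq> {} \<and> SG i x \<subseteq> {..<m}" if "i < n" for i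
    proof (intro allI impI)
      fix x assume "x < ls!i"
      then have xL: "x < Lm" using lLm[OF that] by simp
      have "isline (kf (idx i x)) (Nf (idx i x)) (W (idx i x)) (SS (idx i x))" using L idx_lt[OF xL] by blast
      then show "SG i x \<noteq> {} \<and> SG i x \<subseteq> {..<m}"
        unfolding SG_def isline_def using Nfm[OF idx_lt[OF xL, of i]] by auto
    qed
    have WGp: "\<forall>x<ls!i. \<forall>r. WG i x r < as!i" if "i < n" for i
    proof (intro allI impI)
      fix x r assume "x < ls!i"
      then have xL: "x < Lm" using lLm[OF that] by simp
      have "isline (kf (idx i x)) (Nf (idx i x)) (W (idx i x)) (SS (idx i x))" using L idx_lt[OF xL] by blast
      then show "WG i x r < as!i"
        unfolding WG_def isline_def using wv kf_idx[OF that xL] apos[OF that] by metis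
    qed
    show "\<exists>ps :: (nat \<rightharpoonup> nat) list. length ps = length as \<and>
              (\<forall>i<length as. propP (as!i) (ls!i) m (ps!i)) \<and>
              (\<forall>x < ls!0. \<exists>col. \<forall>rs :: (nat \<rightharpoonup> nat) list.
                  length rs = length as \<and>
                  sealed_rigid_surj (as!0) x (rs!0) \<and>
                  (\<forall>i. 1 \<le> i \<and> i < length as \<longrightarrow> rigid_surj (as!i) (ls!i) (rs!i))
                  \<longrightarrow> c (map (\<lambda>i. if i = 0 then rs!0 \<circ>\<^sub>m p_up (as!0) (ps!0) x
                                  else rs!i \<circ>\<^sub>m ps!i) [0..<length as]) = col)"
    proof (rule exI[of _ ps], intro conjI allI impI)
      show "length ps = length as" unfolding ps_def n_def by simp
      fix i assume "i < length as"
      then have i: "i < n" unfolding n_def .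
      show "propP (as!i) (ls!i) m (ps!i)"
        unfolding psi[OF i] by (rule pmap_propP[OF m0 SGp[OF i] WGp[OF i]])
    next
      fix x assume x: "x < ls!0"
      have xL: "x < Lm" using lLm[OF n0] x by simp
      from CX idx_lt[OF xL] obtain col where
        col: "\<forall>t. (\<forall>j<D. t j < kf j) \<longrightarrow> \<Phi> (idx 0 x) (Min (SS (idx 0 x))) (spt D W SS t) = col"
        by blast
      show "\<exists>col. \<forall>rs :: (nat \<rightharpoonup> nat) list.
                  length rs = length as \<and>
                  sealed_rigid_surj (as!0) x (rs!0) \<and>
                  (\<forall>i. 1 \<le> i \<and> i < length as \<longrightarrow> rigid_surj (as!i) (ls!i) (rs!i))
                  \<longrightarrow> c (map (\<lambda>i. if i = 0 then rs!0 \<circ>\<^sub>m p_up (as!0) (ps!0) x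
                                  else rs!i \<circ>\<^sub>m ps!i) [0..<length as]) = col"
      proof (rule exI[of _ col], intro allI impI)
        fix rs :: "(nat \<rightharpoonup> nat) list"
        assume rs: "length rs = length as \<and> sealed_rigid_surj (as!0) x (rs!0) \<and>
                  (\<forall>i. 1 \<le> i \<and> i < length as \<longrightarrow> rigid_surj (as!i) (ls!i) (rs!i))"
        have r0: "sealed_rigid_surj (as!0) x (rs!0)" using rs by blast
        have ri: "rigid_surj (as!i) (ls!i) (rs!i)" if "1 \<le> i" "i < n" for i
          using rs that unfolding n_def by blast
        define t where "t j = (if j mod Lm < (if crd j = 0 then x else ls!(crd j))
             then the ((rs!(crd j)) (as!(crd j) + j mod Lm)) else 0)" for j
        have tb: "\<forall>j<D. t j < kf j"
        proof (intro allI impI)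
          fix j assume j: "j < D"
          show "t j < kf j"
          proof (cases "j mod Lm < (if crd j = 0 then x else ls!(crd j))")
            case True
            have zz: "as!(crd j) \<le> as!(crd j) + j mod Lm" by simp
            have "\<exists>w<as!(crd j). (rs!(crd j)) (as!(crd j) + j mod Lm) = Some w"
            proof (cases "crd j = 0")
              case True
              have A: "\<forall>z. as!0 \<le> z \<and> z < as!0 + x \<longrightarrow> (\<exists>w<as!0. (rs!0) z = Some w)"
                using r0 unfolding sealed_rigid_surj_def by blast
              have "as!0 + j mod Lm < as!0 + x"
                using \<open>j mod Lm < (if crd j = 0 then x else ls!(crd j))\<close> True by simp
              then have "\<exists>w<as!0. (rs!0) (as!0 + j mod Lm) = Some w" using A by simp
              then show ?thesis using True by simp
            next
              case False
              have A: "\<forall>z. as!(crd j) \<le> z \<and> z < as!(crd j) + ls!(crd j) \<longrightarrow> (\<exists>w<as!(crd j). (rs!(crd j)) z = Some w)"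
                using ri[of "crd j"] False crdn unfolding rigid_surj_def by simp
              have "as!(crd j) + j mod Lm < as!(crd j) + ls!(crd j)"
                using \<open>j mod Lm < (if crd j = 0 then x else ls!(crd j))\<close> False by simp
              then show ?thesis using A by simp
            qed
            then show ?thesis unfolding t_def kf_def using True by auto
          next
            case False
            then show ?thesis unfolding t_def using kpos j by simp
          qed
        qed
        define g where "g = spt D W SS t"
        define j0 where "j0 = Min (SG 0 x)"
        have j0m: "j0 < m"
        proof -
          have S0: "SG 0 x \<noteq> {}" "SG 0 x \<subseteq> {..<m}" using SGp[OF n0] x by auto
          then have "finite (SG 0 x)" by (meson finite_lessThan finite_subset)
          then have "j0 \<in> SG 0 x" unfolding j0_def using S0(1) by (rule Min_in)
          then show ?thesis using S0(2) by auto
        qed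
        have gcol: "\<Phi> (idx 0 x) j0 g = col" using col tb unfolding g_def j0_def SG_def by blast
        have \<Phi>e: "\<Phi> (idx 0 x) j0 g = c (tup g x j0)"
          unfolding \<Phi>_def using div_idx0[OF xL] mod_idx[OF xL] x j0m by simp
        have gG: "G g i x' = lpt (WG i x') (SG i x') (t (idx i x'))" if "x' < Lm" for i x'
          unfolding G_def g_def spt_def WG_def SG_def using idx_lt[OF that] by simp
        have "tup g x j0 = map (\<lambda>i. if i = 0 then rs!0 \<circ>\<^sub>m p_up (as!0) (ps!0) x
                                  else rs!i \<circ>\<^sub>m ps!i) [0..<length as]"
          unfolding tup_def n_def[symmetric]
        proof (rule map_cong[OF refl])
          fix i assume "i \<in> set [0..<n]"
          then have i: "i < n" by simp
          show "(if i = 0 then sealmap (as!0) m (G g 0) x j0 else plainmap (as!i) (ls!i) m (G g i)) =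
                (if i = 0 then rs!0 \<circ>\<^sub>m p_up (as!0) (ps!0) x else rs!i \<circ>\<^sub>m ps!i)"
          proof (cases "i = 0")
            case True
            have Glo: "\<forall>x'<x. G g 0 x' = lpt (WG 0 x') (SG 0 x') (the ((rs!0) (as!0 + x')))"
            proof (intro allI impI)
              fix x' assume x': "x' < x"
              then have x'L: "x' < Lm" using xL by simp
              have "t (idx 0 x') = the ((rs!0) (as!0 + x'))"
                unfolding t_def using crd_idx[OF n0 x'L] mod_idx[OF x'L] x' by simp
              then show "G g 0 x' = lpt (WG 0 x') (SG 0 x') (the ((rs!0) (as!0 + x')))"
                using gG[OF x'L] by simp
            qed
            have Gx: "\<forall>r'<Min (SG 0 x). G g 0 x r' = WG 0 x r'"
            proof (intro allI impI)
              fix r' assume r': "r' < Min (SG 0 x)"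
              have "finite (SG 0 x)" using SGp[OF n0] x by (meson finite_lessThan finite_subset)
              then have "r' \<notin> SG 0 x" using r' Min_le by fastforce
              then show "G g 0 x r' = WG 0 x r'" using gG[OF xL] unfolding lpt_def by simp
            qed
            show ?thesis using True seal_comp[OF x r0 SGp[OF n0] WGp[OF n0] Glo Gx] psi[OF n0]
              unfolding j0_def by simp
          next
            case False
            have Gi: "\<forall>x'<ls!i. G g i x' = lpt (WG i x') (SG i x') (the ((rs!i) (as!i + x')))"
            proof (intro allI impI)
              fix x' assume x': "x' < ls!i"
              then have x'L: "x' < Lm" using lLm[OF i] by simp
              have "t (idx i x') = the ((rs!i) (as!i + x'))"
                unfolding t_def using crd_idx[OF i x'L] mod_idx[OF x'L] x' False by simp
              then show "G g i x' = lpt (WG i x') (SG i x') (the ((rs!i) (as!i + x')))"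
                using gG[OF x'L] by simp
            qed
            have "1 \<le> i" using False by simp
            show ?thesis using False plain_comp[OF ri[OF \<open>1 \<le> i\<close> i] WGp[OF i] Gi] psi[OF i] by simp
          qed
        qed
        then show "c (map (\<lambda>i. if i = 0 then rs!0 \<circ>\<^sub>m p_up (as!0) (ps!0) x
                                  else rs!i \<circ>\<^sub>m ps!i) [0..<length as]) = col"
          using gcol \<Phi>e by simp
      qed
    qed
  qed
qed


end
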